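(* Let $A=\{a_1,\dots,a_s\}$ and $B=\{b_1,\dots,b_t\}$ with costs $\delta(a_i,b_j)$, demands/capacities $\alpha_i\le\alpha'_i$ and $\beta_j\le\beta'_j\le s$, with $\sum_{i=1}^s\alpha'_i>\sum_{j=1}^t\beta_j$. Let $G$ be the weighted bipartite graph constructed as in the context, let $M$ be a minimum weight perfect matching in $G$, and let $L$ be a minimum-cost MMDC between $A$ and $B$. Then $c(L)\le Weight(Main(M))$.
   Context: A many-to-many matching with demands and capacities (MMDC) between $A$ and $B$ is a set $L\subseteq A\times B$ of pairs such that each $a_i$ occurs in at least $\alpha_i$ and at most $\alpha'_i$ pairs of $L$, and each $b_j$ occurs in at least $\beta_j$ and at most $\beta'_j$ pairs of $L$. Its cost is $c(L)=\sum_{(a_i,b_j)\in L}\delta(a_i,b_j)$; a minimum-cost MMDC is one of least cost. Construction of $G=(S\cup T,E)$. Let $\gamma=\max_{i,j}\delta(a_i,b_j)$ and fix numbers $\gamma',\gamma''$ with $\gamma<\gamma'<\gamma''$. The side $S$ consists of pairwise disjoint sets: for each $1\le i\le s$, $A_i=\{a_{i1},\dots,a_{i\alpha_i}\}$ and $A'_i=\{a'_{i1},\dots,a'_{i(\alpha'_i-\alpha_i)}\}$; for each $1\le j\le t$, $X_j=\{x_{j1},\dots,x_{j(\beta'_j-\beta_j)}\}$ and $W_j=\{w_{j1},\dots,w_{j(s-\beta'_j)}\}$. The side $T$ consists of the vertices $b_{ji}$ ($1\le i\le s$, $1\le j\le t$) together with a set $Y$ of $\sum_i\alpha'_i-\sum_j\beta_j$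 vertices. Write $Bset_i=\{b_{1i},\dots,b_{ti}\}$ and $B_j=\{b_{j1},\dots,b_{js}\}$. The edges are: every vertex of $A_i\cup A'_i$ is joined to every $b_{ji}\in Bset_i$ with weight $\delta(a_i,b_j)$; every vertex of $W_j$ is joined to every vertex of $B_j$ with weight $0$; every vertex of $X_j$ is joined to every vertex of $B_j$ with weight $\gamma'$; every vertex of $X_j$ is joined to every vertex of $Y$ with weight $\gamma''$; every vertex of $A'_i$ is joined to every vertex of $Y$ with weight $\gamma'$. The weight of a set of edges is the sum of their weights. The main edges are the edges between $A_i\cup A'_i$ and $Bset_i$ ($1\le i\le s$); for a matching $M$ in $G$, $Main(M)$ denotes the set of main edges of $M$. *)

theory Defs
  imports Complex_Main
begin

text \<open>Indices are 0-based: a_i for i < s, b_j for j < t.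
  Vertices of the auxiliary graph G:
  VA i k   = a_{i,k+1}  (k < alpha i),
  VA' i k  = a'_{i,k+1} (k < alpha' i - alpha i),
  VX j k   = x_{j,k+1}  (k < beta' j - beta j),
  VW j k   = w_{j,k+1}  (k < s - beta' j),
  VB j i   = b_{j i}    (j < t, i < s),
  VY l     = l-th vertex of Y  (l < sum alpha' - sum beta).\<close>

datatype vert = VA nat nat | VA' nat nat | VX nat nat | VW nat nat | VB nat nat | VY nat

definition is_mmdc ::
  "nat \<Rightarrow> nat \<Rightarrow> (nat \<Rightarrow> nat) \<Rightarrow> (nat \<Rightarrow> nat) \<Rightarrow> (nat \<Rightarrow> nat) \<Rightarrow> (nat \<Rightarrow> nat)
   \<Rightarrow> (nat \<times> nat) set \<Rightarrow> bool" where
  "is_mmdc s t alpha alpha' beta beta' L \<longleftrightarrow>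
     L \<subseteq> {0..<s} \<times> {0..<t} \<and>
     (\<forall>i<s. alpha i \<le> card {j. (i, j) \<in> L} \<and> card {j. (i, j) \<in> L} \<le> alpha' i) \<and>
     (\<forall>j<t. beta j \<le> card {i. (i, j) \<in> L} \<and> card {i. (i, j) \<in> L} \<le> beta' j)"

definition mmdc_cost :: "(nat \<Rightarrow> nat \<Rightarrow> real) \<Rightarrow> (nat \<times> nat) set \<Rightarrow> real" where
  "mmdc_cost delta L = (\<Sum>(i, j)\<in>L. delta i j)"

definition is_min_mmdc ::
  "nat \<Rightarrow> nat \<Rightarrow> (nat \<Rightarrow> nat \<Rightarrow> real) \<Rightarrow> (nat \<Rightarrow> nat) \<Rightarrow> (nat \<Rightarrow> nat) \<Rightarrow> (nat \<Rightarrow> nat)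
   \<Rightarrow> (nat \<Rightarrow> nat) \<Rightarrow> (nat \<times> nat) set \<Rightarrow> bool" where
  "is_min_mmdc s t delta alpha alpha' beta beta' L \<longleftrightarrow>
     is_mmdc s t alpha alpha' beta beta' L \<and>
     (\<forall>L'. is_mmdc s t alpha alpha' beta beta' L' \<longrightarrow> mmdc_cost delta L \<le> mmdc_cost delta L')"

definition Sside ::
  "nat \<Rightarrow> nat \<Rightarrow> (nat \<Rightarrow> nat) \<Rightarrow> (nat \<Rightarrow> nat) \<Rightarrow> (nat \<Rightarrow> nat) \<Rightarrow> (nat \<Rightarrow> nat) \<Rightarrow> vert set" where
  "Sside s t alpha alpha' beta beta' =
     {VA i k | i k. i < s \<and> k < alpha i}
   \<union> {VA' i k | i k. i < s \<and> k < alpha' i - alpha i}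
   \<union> {VX j k | j k. j < t \<and> k < beta' j - beta j}
   \<union> {VW j k | j k. j < t \<and> k < s - beta' j}"

definition Tside ::
  "nat \<Rightarrow> nat \<Rightarrow> (nat \<Rightarrow> nat) \<Rightarrow> (nat \<Rightarrow> nat) \<Rightarrow> vert set" where
  "Tside s t alpha' beta =
     {VB j i | j i. j < t \<and> i < s}
   \<union> {VY l | l. l < (\<Sum>i<s. alpha' i) - (\<Sum>j<t. beta j)}"

fun adj :: "vert \<Rightarrow> vert \<Rightarrow> bool" where
  "adj (VA i k) (VB j i') = (i = i')"
| "adj (VA' i k) (VB j i') = (i = i')"
| "adj (VA' i k) (VY l) = True"
| "adj (VW j k) (VB j' i) = (j = j')"
| "adj (VX j k) (VB j' i) = (j = j')"
| "adj (VX j k) (VY l) = True"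
| "adj _ _ = False"

text \<open>Edge weights (gamma1 = gamma', gamma2 = gamma'').\<close>
fun wt :: "(nat \<Rightarrow> nat \<Rightarrow> real) \<Rightarrow> real \<Rightarrow> real \<Rightarrow> vert \<Rightarrow> vert \<Rightarrow> real" where
  "wt delta g1 g2 (VA i k) (VB j i') = delta i j"
| "wt delta g1 g2 (VA' i k) (VB j i') = delta i j"
| "wt delta g1 g2 (VA' i k) (VY l) = g1"
| "wt delta g1 g2 (VW j k) (VB j' i) = 0"
| "wt delta g1 g2 (VX j k) (VB j' i) = g1"
| "wt delta g1 g2 (VX j k) (VY l) = g2"
| "wt delta g1 g2 _ _ = 0"

fun is_main :: "vert \<Rightarrow> vert \<Rightarrow> bool" where
  "is_main (VA i k) (VB j i') = (i = i')"
| "is_main (VA' i k) (VB j i') = (i = i')"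
| "is_main _ _ = False"

definition Gedges ::
  "nat \<Rightarrow> nat \<Rightarrow> (nat \<Rightarrow> nat) \<Rightarrow> (nat \<Rightarrow> nat) \<Rightarrow> (nat \<Rightarrow> nat) \<Rightarrow> (nat \<Rightarrow> nat) \<Rightarrow> (vert \<times> vert) set" where
  "Gedges s t alpha alpha' beta beta' =
     {(u, v). u \<in> Sside s t alpha alpha' beta beta' \<and> v \<in> Tside s t alpha' beta \<and> adj u v}"

definition Main_edges :: "(vert \<times> vert) set \<Rightarrow> (vert \<times> vert) set" where
  "Main_edges M = {e \<in> M. is_main (fst e) (snd e)}"

definition Gweight :: "(nat \<Rightarrow> nat \<Rightarrow> real) \<Rightarrow> real \<Rightarrow> real \<Rightarrow> (vert \<times> vert) set \<Rightarrow> real" where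
  "Gweight delta g1 g2 F = (\<Sum>(u, v)\<in>F. wt delta g1 g2 u v)"

definition is_perfect_matching ::
  "nat \<Rightarrow> nat \<Rightarrow> (nat \<Rightarrow> nat) \<Rightarrow> (nat \<Rightarrow> nat) \<Rightarrow> (nat \<Rightarrow> nat) \<Rightarrow> (nat \<Rightarrow> nat)
   \<Rightarrow> (vert \<times> vert) set \<Rightarrow> bool" where
  "is_perfect_matching s t alpha alpha' beta beta' M \<longleftrightarrow>
     M \<subseteq> Gedges s t alpha alpha' beta beta' \<and>
     (\<forall>e\<in>M. \<forall>e'\<in>M. e \<noteq> e' \<longrightarrow> fst e \<noteq> fst e' \<and> snd e \<noteq> snd e') \<and>
     (\<forall>u\<in>Sside s t alpha alpha' beta beta'. \<exists>v. (u, v) \<in> M) \<and>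
     (\<forall>v\<in>Tside s t alpha' beta. \<exists>u. (u, v) \<in> M)"

definition is_min_weight_perfect_matching ::
  "nat \<Rightarrow> nat \<Rightarrow> (nat \<Rightarrow> nat \<Rightarrow> real) \<Rightarrow> real \<Rightarrow> real \<Rightarrow> (nat \<Rightarrow> nat) \<Rightarrow> (nat \<Rightarrow> nat)
   \<Rightarrow> (nat \<Rightarrow> nat) \<Rightarrow> (nat \<Rightarrow> nat) \<Rightarrow> (vert \<times> vert) set \<Rightarrow> bool" where
  "is_min_weight_perfect_matching s t delta g1 g2 alpha alpha' beta beta' M \<longleftrightarrow>
     is_perfect_matching s t alpha alpha' beta beta' M \<and>
     (\<forall>M'. is_perfect_matching s t alpha alpha' beta beta' M' \<longrightarrow>
        Gweight delta g1 g2 M \<le> Gweight delta g1 g2 M')"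

end

theory Submission
  imports Defs
begin

lemma S_mem:
  "VA i k \<in> Sside s t alpha alpha' beta beta' \<longleftrightarrow> i < s \<and> k < alpha i"
  "VA' i k \<in> Sside s t alpha alpha' beta beta' \<longleftrightarrow> i < s \<and> k < alpha' i - alpha i"
  "VX j k \<in> Sside s t alpha alpha' beta beta' \<longleftrightarrow> j < t \<and> k < beta' j - beta j"
  "VW j k \<in> Sside s t alpha alpha' beta beta' \<longleftrightarrow> j < t \<and> k < s - beta' j"
  by (auto simp: Sside_def)

lemma T_mem:
  "VB j i \<in> Tside s t alpha' beta \<longleftrightarrow> j < t \<and> i < s"
  by (auto simp: Tside_def)

lemma main_B: "is_main u (VB j i) \<longleftrightarrow> (\<exists>k. u = VA i k \<or> u = VA' i k)"
  by (cases u) auto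

lemma adj_nonmain: "adj u (VB j i) \<Longrightarrow> \<not> is_main u (VB j i) \<Longrightarrow> (\<exists>k. u = VW j k \<or> u = VX j k)"
  by (cases u) auto

lemma adj_VA: "adj (VA i k) v \<Longrightarrow> \<exists>j. v = VB j i"
  by (cases v) auto

lemma adj_VW: "adj (VW j k) v \<Longrightarrow> \<exists>i. v = VB j i"
  by (cases v) auto

lemma main_snd: "is_main u v \<Longrightarrow> \<exists>j i. v = VB j i"
  by (cases u; cases v) auto

lemma wt_main: "is_main u (VB j i) \<Longrightarrow> wt delta g1 g2 u (VB j i) = delta i j"
  by (cases u) auto

theorem lemma4:
  fixes s t :: nat
    and delta :: "nat \<Rightarrow> nat \<Rightarrow> real"
    and alpha alpha' beta beta' :: "nat \<Rightarrow> nat"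
    and gamma1 gamma2 :: real
    and L :: "(nat \<times> nat) set"
    and M :: "(vert \<times> vert) set"
  assumes "\<forall>i<s. alpha i \<le> alpha' i"
    and "\<forall>j<t. beta j \<le> beta' j \<and> beta' j \<le> s"
    and "(\<Sum>i<s. alpha' i) > (\<Sum>j<t. beta j)"
    and "\<forall>i<s. \<forall>j<t. delta i j < gamma1"
    and "gamma1 < gamma2"
    and "is_min_weight_perfect_matching s t delta gamma1 gamma2 alpha alpha' beta beta' M"
    and "is_min_mmdc s t delta alpha alpha' beta beta' L"
  shows "mmdc_cost delta L \<le> Gweight delta gamma1 gamma2 (Main_edges M)"
proof -
  let ?S = "Sside s t alpha alpha' beta beta'"
  let ?T = "Tside s t alpha' beta"
  have PM: "is_perfect_matching s t alpha alpha' beta beta' M"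
    using assms(6) by (simp add: is_min_weight_perfect_matching_def)
  have E: "u \<in> ?S \<and> v \<in> ?T \<and> adj u v" if "(u,v) \<in> M" for u v
    using PM that by (auto simp: is_perfect_matching_def Gedges_def)
  have U1: "v = v'" if "(u,v) \<in> M" "(u,v') \<in> M" for u v v'
    using PM that unfolding is_perfect_matching_def by (metis fst_conv snd_conv)
  have U2: "u = u'" if "(u,v) \<in> M" "(u',v) \<in> M" for u u' v
    using PM that unfolding is_perfect_matching_def by (metis fst_conv snd_conv)
  have CS: "\<exists>v. (u,v) \<in> M" if "u \<in> ?S" for u
    using PM that unfolding is_perfect_matching_def by blast
  have CT: "\<exists>u. (u,v) \<in> M" if "v \<in> ?T" for v
    using PM that unfolding is_perfect_matching_def by blast
  define L' where "L' = {(i,j). i < s \<and> j < t \<and> (\<exists>u. (u, VB j i) \<in> M \<and> is_main u (VB j i))}"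
  define h where "h = (\<lambda>(e::vert\<times>vert). case snd e of VB j i \<Rightarrow> (i,j) | _ \<Rightarrow> (0::nat,0::nat))"
  have bij: "bij_betw h (Main_edges M) L'"
  proof (rule bij_betwI')
    fix x y assume x: "x \<in> Main_edges M" and y: "y \<in> Main_edges M"
    obtain u v where xuv: "x = (u,v)" by fastforce
    obtain u' v' where yuv: "y = (u',v')" by fastforce
    from x xuv obtain j i where v: "v = VB j i" using main_snd by (metis (no_types, lifting) Main_edges_def fst_conv mem_Collect_eq snd_conv)
    from y yuv obtain j' i' where v': "v' = VB j' i'" using main_snd by (metis (no_types, lifting) Main_edges_def fst_conv mem_Collect_eq snd_conv)
    show "(h x = h y) = (x = y)"
    proof
      assume "h x = h y"
      then have "v = v'" using xuv yuv v v' by (simp add: h_def)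
      then show "x = y" using U2 x y xuv yuv by (auto simp: Main_edges_def)
    qed simp
  next
    fix x assume x: "x \<in> Main_edges M"
    obtain u v where xuv: "x = (u,v)" by fastforce
    from x xuv obtain j i where v: "v = VB j i" using main_snd by (metis (no_types, lifting) Main_edges_def fst_conv mem_Collect_eq snd_conv)
    have "(u,v) \<in> M" "is_main u v" using x xuv by (auto simp: Main_edges_def)
    then show "h x \<in> L'" using E[of u v] v xuv by (auto simp: h_def L'_def T_mem)
  next
    fix y assume "y \<in> L'"
    then obtain i j u where "y = (i,j)" "(u, VB j i) \<in> M" "is_main u (VB j i)"
      by (auto simp: L'_def)
    then show "\<exists>x\<in>Main_edges M. y = h x"
      by (intro bexI[of _ "(u, VB j i)"]) (auto simp: h_def Main_edges_def)
  qed
  have cost: "mmdc_cost delta L' = Gweight delta gamma1 gamma2 (Main_edges M)"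
  proof -
    have "mmdc_cost delta L' = sum ((\<lambda>(i,j). delta i j) \<circ> h) (Main_edges M)"
      unfolding mmdc_cost_def using sum.reindex_bij_betw[OF bij, of "\<lambda>(i,j). delta i j"] by (simp add: comp_def)
    also have "\<dots> = Gweight delta gamma1 gamma2 (Main_edges M)"
      unfolding Gweight_def
    proof (rule sum.cong)
      fix x assume x: "x \<in> Main_edges M"
      obtain u v where xuv: "x = (u,v)" by fastforce
      from x xuv obtain j i where v: "v = VB j i" using main_snd by (metis (no_types, lifting) Main_edges_def fst_conv mem_Collect_eq snd_conv)
      have "is_main u v" using x xuv by (auto simp: Main_edges_def)
      then show "((\<lambda>(i,j). delta i j) \<circ> h) x = (\<lambda>(u,v). wt delta gamma1 gamma2 u v) x"
        using xuv v wt_main by (auto simp: h_def)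
    qed simp
    finally show ?thesis .
  qed
  have sub: "L' \<subseteq> {0..<s} \<times> {0..<t}" by (auto simp: L'_def)
  have degA: "alpha i \<le> card {j. (i, j) \<in> L'} \<and> card {j. (i, j) \<in> L'} \<le> alpha' i" if i: "i < s" for i
  proof
    let ?D = "{j. (i, j) \<in> L'}"
    have finD: "finite ?D" by (rule finite_subset[of _ "{..<t}"]) (auto simp: L'_def)
    have "\<forall>k. \<exists>j. k < alpha i \<longrightarrow> j < t \<and> (VA i k, VB j i) \<in> M"
    proof (intro allI)
      fix k
      show "\<exists>j. k < alpha i \<longrightarrow> j < t \<and> (VA i k, VB j i) \<in> M"
      proof (cases "k < alpha i")
        case True
        then have "VA i k \<in> ?S" using i by (simp add: S_mem)
        then obtain v where v: "(VA i k, v) \<in> M" using CS by blast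
        then obtain j where "v = VB j i" using E adj_VA by blast
        then show ?thesis using v E[OF v] by (auto simp: T_mem)
      qed simp
    qed
    then obtain f where f: "\<And>k. k < alpha i \<Longrightarrow> f k < t \<and> (VA i k, VB (f k) i) \<in> M" by metis
    have "inj_on f {..<alpha i}"
    proof (rule inj_onI)
      fix k k' assume "k \<in> {..<alpha i}" "k' \<in> {..<alpha i}" "f k = f k'"
      then have "VA i k = VA i k'" using f[of k] f[of k'] U2 by (metis lessThan_iff)
      then show "k = k'" by simp
    qed
    moreover have "f ` {..<alpha i} \<subseteq> ?D" proof
      fix j assume "j \<in> f ` {..<alpha i}"
      then obtain k where k: "k < alpha i" "j = f k" by blast
      have "is_main (VA i k) (VB j i)" by simp
      then show "j \<in> ?D" using f[OF k(1)] k i unfolding L'_def by blast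
    qed
    ultimately have "card {..<alpha i} \<le> card ?D" using finD card_inj_on_le by blast
    then show "alpha i \<le> card ?D" by simp
    have "\<forall>j. \<exists>u. j \<in> ?D \<longrightarrow> (u, VB j i) \<in> M \<and> is_main u (VB j i)"
      by (auto simp: L'_def)
    then obtain g where g: "\<And>j. j \<in> ?D \<Longrightarrow> (g j, VB j i) \<in> M \<and> is_main (g j) (VB j i)" by metis
    let ?R = "VA i ` {..<alpha i} \<union> VA' i ` {..<alpha' i - alpha i}"
    have "inj_on g ?D"
    proof (rule inj_onI)
      fix j j' assume "j \<in> ?D" "j' \<in> ?D" "g j = g j'"
      then have "VB j i = VB j' i" using g[of j] g[of j'] U1 by metis
      then show "j = j'" by simp
    qed
    moreover have "g ` ?D \<subseteq> ?R"
    proof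
      fix u assume "u \<in> g ` ?D"
      then obtain j where j: "j \<in> ?D" "u = g j" by blast
      then obtain k where k: "u = VA i k \<or> u = VA' i k" using g main_B by blast
      have "u \<in> ?S" using E g j by blast
      then show "u \<in> ?R" using k by (auto simp: S_mem)
    qed
    ultimately have "card ?D \<le> card ?R" using card_inj_on_le by blast
    also have "\<dots> \<le> card (VA i ` {..<alpha i}) + card (VA' i ` {..<alpha' i - alpha i})"
      by (rule card_Un_le)
    also have "\<dots> \<le> alpha i + (alpha' i - alpha i)"
      using card_image_le[of "{..<alpha i}" "VA i"] card_image_le[of "{..<alpha' i - alpha i}" "VA' i"]
      by simp
    also have "\<dots> = alpha' i" using assms(1) i by simp
    finally show "card ?D \<le> alpha' i" .
  qed
  have degB: "beta j \<le> card {i. (i, j) \<in> L'} \<and> card {i. (i, j) \<in> L'} \<le> beta' j" if j: "j < t" for j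
  proof -
    let ?D = "{i. (i, j) \<in> L'}"
    let ?C = "{..<s} - ?D"
    have Dsub: "?D \<subseteq> {..<s}" by (auto simp: L'_def)
    have cardC: "card ?C = s - card ?D" using Dsub by (simp add: card_Diff_subset finite_subset)
    have cardD: "card ?D \<le> s" using Dsub card_mono[of "{..<s}" ?D] by simp
    have "\<forall>i. \<exists>u. i \<in> ?C \<longrightarrow> (u, VB j i) \<in> M"
    proof (intro allI)
      fix i
      show "\<exists>u. i \<in> ?C \<longrightarrow> (u, VB j i) \<in> M"
      proof (cases "i < s")
        case True
        then have "VB j i \<in> ?T" using j by (simp add: T_mem)
        then show ?thesis using CT by blast
      qed simp
    qed
    then obtain g where g: "\<And>i. i \<in> ?C \<Longrightarrow> (g i, VB j i) \<in> M" by metis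
    let ?R = "VW j ` {..<s - beta' j} \<union> VX j ` {..<beta' j - beta j}"
    have "inj_on g ?C"
    proof (rule inj_onI)
      fix i i' assume "i \<in> ?C" "i' \<in> ?C" "g i = g i'"
      then have "VB j i = VB j i'" using g[of i] g[of i'] U1 by metis
      then show "i = i'" by simp
    qed
    moreover have "g ` ?C \<subseteq> ?R"
    proof
      fix u assume "u \<in> g ` ?C"
      then obtain i where i: "i \<in> ?C" "u = g i" by blast
      have m: "(u, VB j i) \<in> M" using g i by blast
      have "\<not> is_main u (VB j i)"
      proof
        assume "is_main u (VB j i)"
        then have "i \<in> ?D" using m i j by (auto simp: L'_def)
        then show False using i by blast
      qed
      then obtain k where k: "u = VW j k \<or> u = VX j k" using adj_nonmain E[OF m] by blast
      have "u \<in> ?S" using E m by blast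
      then show "u \<in> ?R" using k by (auto simp: S_mem)
    qed
    ultimately have "card ?C \<le> card ?R" using card_inj_on_le by blast
    also have "\<dots> \<le> card (VW j ` {..<s - beta' j}) + card (VX j ` {..<beta' j - beta j})"
      by (rule card_Un_le)
    also have "\<dots> \<le> (s - beta' j) + (beta' j - beta j)"
      using card_image_le[of "{..<s - beta' j}" "VW j"] card_image_le[of "{..<beta' j - beta j}" "VX j"]
      by simp
    finally have c1: "card ?C \<le> (s - beta' j) + (beta' j - beta j)" .
    have "\<forall>k. \<exists>i. k < s - beta' j \<longrightarrow> i < s \<and> (VW j k, VB j i) \<in> M"
    proof (intro allI)
      fix k
      show "\<exists>i. k < s - beta' j \<longrightarrow> i < s \<and> (VW j k, VB j i) \<in> M"
      proof (cases "k < s - beta' j")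
        case True
        then have "VW j k \<in> ?S" using j by (simp add: S_mem)
        then obtain v where v: "(VW j k, v) \<in> M" using CS by blast
        then obtain i where "v = VB j i" using E adj_VW by blast
        then show ?thesis using v E[OF v] by (auto simp: T_mem)
      qed simp
    qed
    then obtain f where f: "\<And>k. k < s - beta' j \<Longrightarrow> f k < s \<and> (VW j k, VB j (f k)) \<in> M" by metis
    have "inj_on f {..<s - beta' j}"
    proof (rule inj_onI)
      fix k k' assume "k \<in> {..<s - beta' j}" "k' \<in> {..<s - beta' j}" "f k = f k'"
      then have "VW j k = VW j k'" using f[of k] f[of k'] U2 by (metis lessThan_iff)
      then show "k = k'" by simp
    qed
    moreover have "f ` {..<s - beta' j} \<subseteq> ?C"
    proof
      fix i assume "i \<in> f ` {..<s - beta' j}"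
      then obtain k where k: "k < s - beta' j" "i = f k" by blast
      have m: "(VW j k, VB j i) \<in> M" using f k by blast
      have "i \<notin> ?D"
      proof
        assume "i \<in> ?D"
        then obtain u where "(u, VB j i) \<in> M" "is_main u (VB j i)" by (auto simp: L'_def)
        then have "u = VW j k" using U2[OF m] by blast
        then show False using \<open>is_main u (VB j i)\<close> by simp
      qed
      then show "i \<in> ?C" using f k by auto
    qed
    ultimately have "card {..<s - beta' j} \<le> card ?C" using card_inj_on_le by blast
    then have c2: "s - beta' j \<le> card ?C" by simp
    show ?thesis using c1 c2 cardC cardD assms(2) j by auto
  qed
  have "is_mmdc s t alpha alpha' beta beta' L'"
    unfolding is_mmdc_def using sub degA degB by blast
  then have "mmdc_cost delta L \<le> mmdc_cost delta L'"
    using assms(7) by (simp add: is_min_mmdc_def)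
  then show ?thesis using cost by simp
qed

end
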